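(* Let $\underline{\mathbb{G}}=(\mathbb{G},\mathcal{V},\omega_{\mathcal{V}},\mathcal{F},\omega_{\mathcal{F}})$ be a packaged ribbon graph and $\Gamma$ a finite group whose irreducible representations have dimensions $n_1,\dots,n_k$. Then: (1) when $x=1$, $y=-|\Gamma|$, $x_g=1$ and $y_g=-\frac{1}{|\Gamma|}\sum_{i=1}^k n_i^{2-2g}$ for all indices $g$, we have $q_\Gamma(\underline{\mathbb{G}}_\mathcal{V})=(-1)^{e(\mathbb{G})-|\mathcal{V}|}\boldsymbol{T}(\underline{\mathbb{G}};\boldsymbol{x},\boldsymbol{y})$; (2) when $x=-|\Gamma|$, $y=1$, $x_g=-\frac{1}{|\Gamma|}\sum_{i=1}^k n_i^{2-2g}$ and $y_g=1$ for all indices $g$, we have $p_\Gamma(\underline{\mathbb{G}}_\mathcal{F})=(-1)^{e(\mathbb{G})-|\mathcal{F}|}\boldsymbol{T}(\underline{\mathbb{G}};\boldsymbol{x},\boldsymbol{y})$.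
   Context: All ribbon graphs are orientable. A ribbon graph $\mathbb{G}=(V,E)$ is an orientable surface with boundary formed as a union of discs $V$ (vertices) and discs $E$ (edges) meeting in disjoint arcs, each arc on the boundary of exactly one vertex and one edge, each edge containing two arcs. For ribbon graphs $v,e,f,k$ count vertices, edges, boundary components, components; for graphs $v,e,k$ likewise and nullity $n=e-v+k$. $\mathbb{G}|A$ is the spanning ribbon subgraph on $A\subseteq E$, $A^c=E\setminus A$; $\mathbb{G}/A$ contracts the edges of $A$ (contracting $e$ with ends $u,v$: attach discs to the boundary curves of $e\cup u\cup v$ as new vertices, remove $e,u,v$), boundary components correspond naturally. The dual $\mathbb{G}^*$ has as vertices discs capping the boundary components of $\mathbb{G}$, same edges; vertices of $\mathbb{G}^*$ are identified with boundary components of $\mathbb{G}$. A packaged ribbon graph $\underline{\mathbb{G}}=(\mathbb{G},\mathcal{V},\omega_{\mathcal{V}},\mathcal{F},\omega_{\mathcal{F}})$: $\mathcal{V}$ a partition of the vertices, $\mathcal{F}$ a partition of the boundary components (equivalently of the vertices of $\mathbb{G}^*$), $\omega_{\mathcal{V}}:\mathcal{V}\to\mathbb{N}_0$, $\omega_{\mathcal{F}}:\mathcal{F}\to\mathbb{N}_0$; $\omega(\cdot)$ of a set of blocks is the total weight, $\omega_{\mathcal{V}}(\mathbb{G})$, $\omega_{\mathcal{F}}(\mathbb{G})$ the totals. $\underline{\mathbb{G}}_\mathcal{V}=(\mathbb{G},\mathcal{V},\omega_{\mathcal{V}})$, $\underline{\mathbb{G}}_\mathcal{F}=(\mathbb{G},\mathcal{F},\omega_{\mathcal{F}})$.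 Packaging: for a ribbon graph $\mathbb{H}$ with vertex partition $\mathcal{P}$, $G(\mathbb{H};\mathcal{P})$ has vertex set $\mathcal{P}$ and an edge $([u],[v])$ for each edge $(u,v)$ of $\mathbb{H}$. For a subgraph $K$, $\mathbb{H}[K]$ is the ribbon subgraph with all vertices in blocks that are vertices of $K$ and edges corresponding to those of $K$; $f(\mathbb{H}[K])$ its number of boundary components. Packaged surface Tutte polynomial, $\boldsymbol{x}=(x,x_0,x_{1/2},x_1,\dots)$, $\boldsymbol{y}=(y,y_0,y_{1/2},y_1,\dots)$: \[\boldsymbol{T}(\underline{\mathbb{G}};\boldsymbol{x},\boldsymbol{y})= \sum_{A\subseteq E} x^{n(G(\mathbb{G}^*|A^c;\mathcal{F}))}y^{n(G(\mathbb{G}|A;\mathcal{V}))}\prod_{H \text{ cpt. of } G(\mathbb{G}^*|A^c;\mathcal{F})}x_{g(\mathbb{G}^*,H)}\prod_{K \text{ cpt. of } G(\mathbb{G}|A;\mathcal{V})}y_{g(\mathbb{G},K)},\] with $g(\mathbb{G},K)=\tfrac12(2k(K)+e(K)-v(K)+\omega_{\mathcal{V}}(K)-f(\mathbb{G}[K]))$ and $g(\mathbb{G}^*,H)=\tfrac12(2k(H)+e(H)-v(H)+\omega_{\mathcal{F}}(H)-f(\mathbb{G}^*[H]))$. Flow/tension counts: for a subgraph $K$ of $G(\mathbb{G};\mathcal{V})$, $\underline{\mathbb{G}}_\mathcal{V}[K]=(\mathbb{G}[K],\mathcal{V}',\omega'_{\mathcal{V}})$ with restricted partition/weights; for a subgraph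 $H$ of $G(\mathbb{G}^*;\mathcal{F})$, $\underline{\mathbb{G}}_\mathcal{F}[H]=((\mathbb{G}^*[H])^*,\mathcal{F}',\omega'_{\mathcal{F}})$ with restricted partition/weights. If $G(\mathbb{G};\mathcal{V})$ is connected, $q^1_\Gamma(\underline{\mathbb{G}}_\mathcal{V})=|\Gamma|^{e(\mathbb{G})-|\mathcal{V}|}\sum_i n_i^{f(\mathbb{G})-e(\mathbb{G})+|\mathcal{V}|-\omega_{\mathcal{V}}(\mathbb{G})}$, otherwise the product of $q^1_\Gamma(\underline{\mathbb{G}}_\mathcal{V}[K])$ over components $K$; $q_\Gamma(\underline{\mathbb{G}}_\mathcal{V})=\sum_{A\subseteq E}(-1)^{|A^c|}q^1_\Gamma((\mathbb{G}|A,\mathcal{V},\omega_{\mathcal{V}}))$. If $G(\mathbb{G}^*;\mathcal{F})$ is connected, $p^1_\Gamma(\underline{\mathbb{G}}_\mathcal{F})=|\Gamma|^{e(\mathbb{G})-|\mathcal{F}|}\sum_i n_i^{v(\mathbb{G})-e(\mathbb{G})+|\mathcal{F}|-\omega_{\mathcal{F}}(\mathbb{G})}$, otherwise the product of $p^1_\Gamma(\underline{\mathbb{G}}_\mathcal{F}[H])$ over components $H$; $p_\Gamma(\underline{\mathbb{G}}_\mathcal{F})=\sum_{A\subseteq E}(-1)^{|A^c|}p^1_\Gamma((\mathbb{G}/A^c,\mathcal{F},\omega_{\mathcal{F}}))$. *)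

theory Defs
  imports Complex_Main "Jordan_Normal_Form.Matrix" "HOL-Algebra.Group" "HOL-Library.Disjoint_Sets"
begin

text \<open>An (orientable) ribbon graph is encoded combinatorially: a finite set of vertices,
a finite set of darts (half-edges), the vertex at which each dart sits, a rotation
permutation (cyclic order of darts around each vertex, one cycle per non-isolated vertex)
and a fixed-point-free involution pairing the two darts of each edge.
Vertices without darts are isolated vertices (discs without edges).\<close>

record ('v, 'd) rgraph =
  verts :: "'v set"
  darts :: "'d set"
  vx    :: "'d \<Rightarrow> 'v"
  rot   :: "'d \<Rightarrow> 'd"
  opp   :: "'d \<Rightarrow> 'd"

definition wf_rgraph :: "('v, 'd) rgraph \<Rightarrow> bool" where
  "wf_rgraph G \<longleftrightarrow>
     finite (verts G) \<and> finite (darts G) \<and>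
     (\<forall>d\<in>darts G. vx G d \<in> verts G) \<and>
     bij_betw (rot G) (darts G) (darts G) \<and>
     (\<forall>d\<in>darts G. vx G (rot G d) = vx G d) \<and>
     (\<forall>d\<in>darts G. \<forall>d'\<in>darts G. vx G d = vx G d' \<longrightarrow> (\<exists>k. (rot G ^^ k) d = d')) \<and>
     (\<forall>d\<in>darts G. opp G d \<in> darts G \<and> opp G d \<noteq> d \<and> opp G (opp G d) = d)"

definition edges :: "('v, 'd) rgraph \<Rightarrow> 'd set set" where
  "edges G = (\<lambda>d. {d, opp G d}) ` darts G"

definition orbit_of :: "('d \<Rightarrow> 'd) \<Rightarrow> 'd \<Rightarrow> 'd set" where
  "orbit_of f d = {(f ^^ k) d | k. True}"

definition isolated_verts :: "('v, 'd) rgraph \<Rightarrow> 'v set" where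
  "isolated_verts G = {v \<in> verts G. \<forall>d\<in>darts G. vx G d \<noteq> v}"

text \<open>Face permutation; its orbits are the boundary components through darts.\<close>
definition facep :: "('v, 'd) rgraph \<Rightarrow> 'd \<Rightarrow> 'd" where
  "facep G = rot G \<circ> opp G"

definition faces :: "('v, 'd) rgraph \<Rightarrow> ('v + 'd set) set" where
  "faces G = Inl ` isolated_verts G \<union> Inr ` (orbit_of (facep G) ` darts G)"

definition nv :: "('v, 'd) rgraph \<Rightarrow> nat" where "nv G = card (verts G)"
definition ne :: "('v, 'd) rgraph \<Rightarrow> nat" where "ne G = card (edges G)"
definition nf :: "('v, 'd) rgraph \<Rightarrow> nat" where "nf G = card (faces G)"

definition dual :: "('v, 'd) rgraph \<Rightarrow> ('v + 'd set, 'd) rgraph" where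
  "dual G = \<lparr> verts = faces G, darts = darts G,
              vx = (\<lambda>d. Inr (orbit_of (facep G) d)),
              rot = facep G, opp = opp G \<rparr>"

definition first_return :: "('d \<Rightarrow> 'd) \<Rightarrow> 'd set \<Rightarrow> 'd \<Rightarrow> 'd" where
  "first_return f S d = (f ^^ (LEAST k. 0 < k \<and> (f ^^ k) d \<in> S)) d"

definition subrg :: "('v, 'd) rgraph \<Rightarrow> 'v set \<Rightarrow> 'd set set \<Rightarrow> ('v, 'd) rgraph" where
  "subrg G W B = \<lparr> verts = W, darts = \<Union>B, vx = vx G,
                   rot = first_return (rot G) (\<Union>B), opp = opp G \<rparr>"

definition restr :: "('v, 'd) rgraph \<Rightarrow> 'd set set \<Rightarrow> ('v, 'd) rgraph" where
  "restr G A = subrg G (verts G) A"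

definition blk :: "'v set set \<Rightarrow> 'v \<Rightarrow> 'v set" where
  "blk P u = (THE X. X \<in> P \<and> u \<in> X)"

definition padj :: "('v, 'd) rgraph \<Rightarrow> 'v set set \<Rightarrow> ('v set \<times> 'v set) set" where
  "padj H P = {(blk P (vx H d), blk P (vx H (opp H d))) | d. d \<in> darts H}"

text \<open>Connected components of \<open>G(H;P)\<close>, each given as its set of vertices (blocks).\<close>
definition pcomps :: "('v, 'd) rgraph \<Rightarrow> 'v set set \<Rightarrow> 'v set set set" where
  "pcomps H P = (\<lambda>X. {Y \<in> P. (X, Y) \<in> (padj H P)\<^sup>*}) ` P"

definition comp_edges :: "('v, 'd) rgraph \<Rightarrow> 'v set set \<Rightarrow> 'v set set \<Rightarrow> 'd set set" where
  "comp_edges H P C = {e \<in> edges H. \<exists>d\<in>e. blk P (vx H d) \<in> C}"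

definition comp_rg :: "('v, 'd) rgraph \<Rightarrow> 'v set set \<Rightarrow> 'v set set \<Rightarrow> ('v, 'd) rgraph" where
  "comp_rg H P C = subrg H (\<Union>C) (comp_edges H P C)"

definition pnullity :: "('v, 'd) rgraph \<Rightarrow> 'v set set \<Rightarrow> nat" where
  "pnullity H P = ne H + card (pcomps H P) - card P"

text \<open>Twice the genus \<open>g(H,K) = (2k(K)+e(K)-v(K)+\<omega>(K)-f(H[K]))/2\<close> of a component \<open>K\<close>
(for which \<open>k(K) = 1\<close>), as an integer; the variables \<open>x_g, y_g\<close> are indexed by \<open>2g\<close>.\<close>
definition gen2 :: "('v, 'd) rgraph \<Rightarrow> 'v set set \<Rightarrow> ('v set \<Rightarrow> nat) \<Rightarrow> 'v set set \<Rightarrow> int" where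
  "gen2 H P w C = 2 + int (card (comp_edges H P C)) - int (card C) + int (\<Sum>X\<in>C. w X)
                    - int (nf (comp_rg H P C))"

definition packaged :: "('v, 'd) rgraph \<Rightarrow> 'v set set \<Rightarrow> ('v + 'd set) set set \<Rightarrow> bool" where
  "packaged G VV FF \<longleftrightarrow> wf_rgraph G \<and> partition_on (verts G) VV \<and> partition_on (faces G) FF"

text \<open>\<open>x, y\<close> are the variables \<open>x, y\<close>; \<open>xg j\<close>, \<open>yg j\<close> stand for \<open>x_{j/2}\<close>, \<open>y_{j/2}\<close>.\<close>
definition tutte :: "('v, 'd) rgraph \<Rightarrow> 'v set set \<Rightarrow> ('v set \<Rightarrow> nat)
     \<Rightarrow> ('v + 'd set) set set \<Rightarrow> (('v + 'd set) set \<Rightarrow> nat)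
     \<Rightarrow> real \<Rightarrow> (int \<Rightarrow> real) \<Rightarrow> real \<Rightarrow> (int \<Rightarrow> real) \<Rightarrow> real" where
  "tutte G VV wV FF wF x xg y yg =
     (\<Sum>A\<in>Pow (edges G).
        x ^ pnullity (restr (dual G) (edges G - A)) FF *
        y ^ pnullity (restr G A) VV *
        (\<Prod>H\<in>pcomps (restr (dual G) (edges G - A)) FF.
            xg (gen2 (restr (dual G) (edges G - A)) FF wF H)) *
        (\<Prod>K\<in>pcomps (restr G A) VV. yg (gen2 (restr G A) VV wV K)))"

text \<open>\<open>q\<^sup>1_\<Gamma>(H,P,\<omega>)\<close>: product over components \<open>K\<close> of \<open>G(H;P)\<close> of the connected formula
applied to \<open>H[K]\<close>. \<open>N\<close> is \<open>|\<Gamma>|\<close>, \<open>ns\<close> the list of irreducible dimensions.\<close>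
definition qone :: "nat \<Rightarrow> nat list \<Rightarrow> ('v, 'd) rgraph \<Rightarrow> 'v set set \<Rightarrow> ('v set \<Rightarrow> nat) \<Rightarrow> real" where
  "qone N ns H P w =
     (\<Prod>K\<in>pcomps H P.
        real N powi (int (card (comp_edges H P K)) - int (card K)) *
        (\<Sum>n\<leftarrow>ns. real n powi (int (nf (comp_rg H P K)) - int (card (comp_edges H P K))
                                 + int (card K) - int (\<Sum>X\<in>K. w X))))"

definition qflow :: "nat \<Rightarrow> nat list \<Rightarrow> ('v, 'd) rgraph \<Rightarrow> 'v set set \<Rightarrow> ('v set \<Rightarrow> nat) \<Rightarrow> real" where
  "qflow N ns G VV wV = (\<Sum>A\<in>Pow (edges G). (-1) ^ card (edges G - A) * qone N ns (restr G A) VV wV)"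

text \<open>\<open>p\<^sup>1_\<Gamma>(\<HH>,P,\<omega>)\<close>, expressed through \<open>Hd = \<HH>\<^sup>*\<close> (whose vertices are the boundary
components of \<open>\<HH>\<close>, partitioned by \<open>P\<close>): product over components \<open>K\<close> of \<open>G(\<HH>\<^sup>*;P)\<close>;
note \<open>v((\<HH>\<^sup>*[K])\<^sup>*) = f(\<HH>\<^sup>*[K])\<close>.\<close>
definition pone_dual :: "nat \<Rightarrow> nat list \<Rightarrow> ('u, 'd) rgraph \<Rightarrow> 'u set set \<Rightarrow> ('u set \<Rightarrow> nat) \<Rightarrow> real" where
  "pone_dual N ns Hd P w =
     (\<Prod>K\<in>pcomps Hd P.
        real N powi (int (card (comp_edges Hd P K)) - int (card K)) *
        (\<Sum>n\<leftarrow>ns. real n powi (int (nf (comp_rg Hd P K)) - int (card (comp_edges Hd P K))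
                                 + int (card K) - int (\<Sum>X\<in>K. w X))))"

text \<open>Dual of the contraction \<open>G/B\<close>: \<open>(G/B)\<^sup>* = G\<^sup>* \<setminus> B\<close>, with the boundary components of \<open>G/B\<close>
identified with those of \<open>G\<close> (i.e. with the vertices of \<open>G\<^sup>*\<close>).\<close>
definition contract_dual :: "('v, 'd) rgraph \<Rightarrow> 'd set set \<Rightarrow> ('v + 'd set, 'd) rgraph" where
  "contract_dual G B = restr (dual G) (edges G - B)"

definition pflow :: "nat \<Rightarrow> nat list \<Rightarrow> ('v, 'd) rgraph \<Rightarrow> ('v + 'd set) set set
                      \<Rightarrow> (('v + 'd set) set \<Rightarrow> nat) \<Rightarrow> real" where
  "pflow N ns G FF wF = (\<Sum>A\<in>Pow (edges G).
      (-1) ^ card (edges G - A) * pone_dual N ns (contract_dual G (edges G - A)) FF wF)"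

definition is_rep :: "('g, 'b) monoid_scheme \<Rightarrow> nat \<Rightarrow> ('g \<Rightarrow> complex mat) \<Rightarrow> bool" where
  "is_rep \<Gamma> n \<rho> \<longleftrightarrow> (\<forall>g\<in>carrier \<Gamma>. \<rho> g \<in> carrier_mat n n) \<and>
     (\<forall>g\<in>carrier \<Gamma>. \<forall>h\<in>carrier \<Gamma>. \<rho> (g \<otimes>\<^bsub>\<Gamma>\<^esub> h) = \<rho> g * \<rho> h) \<and>
     \<rho> \<one>\<^bsub>\<Gamma>\<^esub> = 1\<^sub>m n"

definition invariant_subspace :: "('g, 'b) monoid_scheme \<Rightarrow> nat \<Rightarrow> ('g \<Rightarrow> complex mat) \<Rightarrow> complex vec set \<Rightarrow> bool" where
  "invariant_subspace \<Gamma> n \<rho> W \<longleftrightarrow> W \<subseteq> carrier_vec n \<and> 0\<^sub>v n \<in> W \<and>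
     (\<forall>v\<in>W. \<forall>u\<in>W. v + u \<in> W) \<and> (\<forall>c. \<forall>v\<in>W. c \<cdot>\<^sub>v v \<in> W) \<and>
     (\<forall>g\<in>carrier \<Gamma>. \<forall>v\<in>W. \<rho> g *\<^sub>v v \<in> W)"

definition irred_rep :: "('g, 'b) monoid_scheme \<Rightarrow> nat \<Rightarrow> ('g \<Rightarrow> complex mat) \<Rightarrow> bool" where
  "irred_rep \<Gamma> n \<rho> \<longleftrightarrow> is_rep \<Gamma> n \<rho> \<and> 0 < n \<and>
     (\<forall>W. invariant_subspace \<Gamma> n \<rho> W \<longrightarrow> W = {0\<^sub>v n} \<or> W = carrier_vec n)"

definition equiv_rep :: "('g, 'b) monoid_scheme \<Rightarrow> nat \<Rightarrow> ('g \<Rightarrow> complex mat) \<Rightarrow> nat \<Rightarrow> ('g \<Rightarrow> complex mat) \<Rightarrow> bool" where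
  "equiv_rep \<Gamma> n \<rho> m \<sigma> \<longleftrightarrow> n = m \<and>
     (\<exists>P\<in>carrier_mat n n. \<exists>Q\<in>carrier_mat n n. P * Q = 1\<^sub>m n \<and> Q * P = 1\<^sub>m n \<and>
        (\<forall>g\<in>carrier \<Gamma>. P * \<rho> g = \<sigma> g * P))"

definition irrep_dims :: "('g, 'b) monoid_scheme \<Rightarrow> nat list \<Rightarrow> bool" where
  "irrep_dims \<Gamma> ns \<longleftrightarrow> (\<exists>\<rho>s.
     (\<forall>i<length ns. irred_rep \<Gamma> (ns ! i) (\<rho>s i)) \<and>
     (\<forall>i<length ns. \<forall>j<length ns. i \<noteq> j \<longrightarrow> \<not> equiv_rep \<Gamma> (ns ! i) (\<rho>s i) (ns ! j) (\<rho>s j)) \<and>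
     (\<forall>n \<rho>. irred_rep \<Gamma> n \<rho> \<longrightarrow> (\<exists>i<length ns. equiv_rep \<Gamma> n \<rho> (ns ! i) (\<rho>s i))))"

end

theory Submission
  imports Defs
begin



lemma prod_powi:
  fixes x :: real
  assumes "finite C" "x \<noteq> 0"
  shows "(\<Prod>K\<in>C. x powi f K) = x powi (\<Sum>K\<in>C. f K)"
  using assms(1)
proof (induction C rule: finite_induct)
  case empty then show ?case by simp
next
  case (insert a C)
  have "(\<Prod>K\<in>insert a C. x powi f K) = x powi f a * (\<Prod>K\<in>C. x powi f K)"
    using insert.hyps by (rule prod.insert)
  also have "\<dots> = x powi f a * x powi (\<Sum>K\<in>C. f K)" using insert.IH by simp
  also have "\<dots> = x powi (f a + (\<Sum>K\<in>C. f K))" by (rule power_int_add[symmetric]) (use assms(2) in simp)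
  also have "f a + (\<Sum>K\<in>C. f K) = (\<Sum>K\<in>insert a C. f K)"
    using insert.hyps by simp
  finally show ?case .
qed

lemma neg1_powi_even:
  "((-1::real) powi (m + 2 * t)) = (-1) powi m"
  by (simp add: power_int_add power_int_mult)

lemma rearr: "(a::real) * ((b * c) * ((d * e) * f)) = ((a * b) * d) * (c * e) * f"
  by (simp only: mult.assoc mult.left_commute)

lemma alg:
  fixes C :: "'k set" and e c :: "'k \<Rightarrow> nat" and a :: "'k \<Rightarrow> real" and N :: real
  assumes fin: "finite C" and Npos: "N > 0" and hE: "(\<Sum>K\<in>C. e K) = E" and hV: "(\<Sum>K\<in>C. c K) = V"
    and le: "V \<le> E + card C" and hm: "m + E = Et"
  shows "(-1) ^ m * (\<Prod>K\<in>C. N powi (int (e K) - int (c K)) * a K)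
       = (-1) powi (int Et - int V) * ((-N) ^ (E + card C - V) * (\<Prod>K\<in>C. -(1/N) * a K))"
proof -
  define n where "n = E + card C - V"
  define k where "k = card C"
  have nint: "int n = int E + int k - int V" using le by (simp add: n_def k_def)
  have p1: "(\<Prod>K\<in>C. N powi (int (e K) - int (c K))) = N powi (int E - int V)"
  proof -
    have "(\<Prod>K\<in>C. N powi (int (e K) - int (c K))) = N powi (\<Sum>K\<in>C. int (e K) - int (c K))"
      using prod_powi[OF fin] Npos by simp
    also have "(\<Sum>K\<in>C. int (e K) - int (c K)) = int E - int V"
      using hE hV by (simp add: sum_subtractf flip: of_nat_sum)
    finally show ?thesis .
  qed
  have L: "(\<Prod>K\<in>C. N powi (int (e K) - int (c K)) * a K) = N powi (int E - int V) * (\<Prod>K\<in>C. a K)"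
    using p1 by (simp add: prod.distrib)
  have p2: "(\<Prod>K\<in>C. -(1/N) * a K) = (-1) ^ k * N powi (- int k) * (\<Prod>K\<in>C. a K)"
  proof -
    have "(\<Prod>K\<in>C. -(1/N) * a K) = (-(1/N)) ^ k * (\<Prod>K\<in>C. a K)"
      unfolding k_def by (simp only: prod.distrib prod_constant)
    also have "(-(1/N)) ^ k = (-1) ^ k * N powi (- int k)"
    proof -
      have "(-(1/N)) ^ k = (-1) ^ k * (1/N) ^ k" by (rule power_minus)
      also have "(1/N) ^ k = N powi (- int k)" by (metis power_int_minus power_int_of_nat power_one_over inverse_eq_divide)
      finally show ?thesis .
    qed
    finally show ?thesis .
  qed
  have p3: "(-N) ^ n = (-1) ^ n * N powi (int n)"
  proof -
    have "(-N) ^ n = (-1) ^ n * N ^ n" by (rule power_minus)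
    then show ?thesis by (simp only: power_int_of_nat)
  qed
  have s: "(-1::real) powi (int Et - int V) * (-1) ^ n * (-1) ^ k = (-1) ^ m"
  proof -
    have "(-1::real) powi (int Et - int V) * (-1) ^ n * (-1) ^ k
        = (-1) powi (int Et - int V + int n + int k)"
      by (simp add: power_int_add)
    also have "int Et - int V + int n + int k = int m + 2 * (int E - int V + int k)"
      using nint hm by simp
    also have "(-1::real) powi (int m + 2 * (int E - int V + int k)) = (-1) ^ m"
      by (simp only: neg1_powi_even) simp
    finally show ?thesis .
  qed
  have nn: "N powi (int n) * N powi (- int k) = N powi (int E - int V)"
  proof -
    have "N powi (int n) * N powi (- int k) = N powi (int n + - int k)"
      by (rule power_int_add[symmetric]) (use Npos in simp)
    also have "int n + - int k = int E - int V" using nint by simp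
    finally show ?thesis .
  qed
  have "(-1) powi (int Et - int V) * ((-N) ^ n * (\<Prod>K\<in>C. -(1/N) * a K))
      = (-1) powi (int Et - int V) * (((-1) ^ n * N powi (int n)) * ((-1) ^ k * N powi (- int k) * (\<Prod>K\<in>C. a K)))"
    by (simp only: p2 p3)
  also have "\<dots> = ((-1) powi (int Et - int V) * (-1) ^ n * (-1) ^ k) * (N powi (int n) * N powi (- int k)) * (\<Prod>K\<in>C. a K)"
    by (rule rearr)
  also have "\<dots> = (-1) ^ m * (N powi (int E - int V) * (\<Prod>K\<in>C. a K))"
    unfolding s nn by (rule mult.assoc)
  finally show ?thesis by (simp only: L n_def)
qed

definition cls :: "'a set \<Rightarrow> ('a \<times> 'a) set \<Rightarrow> 'a \<Rightarrow> 'a set" where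
  "cls P R X = {Y\<in>P. (X,Y)\<in>R\<^sup>*}"

lemma cls_eq:
  assumes "sym R" "(X,X') \<in> R\<^sup>*"
  shows "cls P R X = cls P R X'"
proof -
  have s: "sym (R\<^sup>*)" using assms(1) by (rule sym_rtrancl)
  have "(X',X) \<in> R\<^sup>*" using s assms(2) by (meson symD)
  then show ?thesis using assms(2) unfolding cls_def by (auto intro: rtrancl_trans)
qed

lemma comps_same:
  assumes "sym R" "K \<in> cls P R ` P" "K' \<in> cls P R ` P" "Z \<in> K" "Z' \<in> K'" "(Z,Z') \<in> R\<^sup>*"
  shows "K = K'"
proof -
  have s: "sym (R\<^sup>*)" using assms(1) by (rule sym_rtrancl)
  obtain X where X: "X \<in> P" "K = cls P R X" using assms(2) by blast
  obtain X' where X': "X' \<in> P" "K' = cls P R X'" using assms(3) by blast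
  have "(X,Z) \<in> R\<^sup>*" using X assms(4) by (auto simp: cls_def)
  moreover have "(X',Z') \<in> R\<^sup>*" using X' assms(5) by (auto simp: cls_def)
  then have "(Z',X') \<in> R\<^sup>*" using s by (meson symD)
  ultimately have "(X,X') \<in> R\<^sup>*" using assms(6) by (meson rtrancl_trans)
  then show ?thesis using X X' cls_eq[OF assms(1)] by simp
qed

lemma comps_union: "\<Union>(cls P R ` P) = P"
  unfolding cls_def by auto

lemma comps_card_sum:
  assumes "finite P" "sym R"
  shows "(\<Sum>K\<in>cls P R ` P. card K) = card P"
proof -
  have "pairwise disjnt (cls P R ` P)"
    unfolding pairwise_def disjnt_def
  proof (intro ballI impI)
    fix K K' assume h: "K \<in> cls P R ` P" "K' \<in> cls P R ` P" "K \<noteq> K'"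
    show "K \<inter> K' = {}"
    proof (rule ccontr)
      assume "K \<inter> K' \<noteq> {}"
      then obtain Z where "Z \<in> K" "Z \<in> K'" by blast
      then have "K = K'" using comps_same[OF assms(2) h(1) h(2)] by blast
      then show False using h(3) by simp
    qed
  qed
  moreover have "\<And>K. K \<in> cls P R ` P \<Longrightarrow> finite K"
    using assms(1) unfolding cls_def by auto
  ultimately have "card (\<Union>(cls P R ` P)) = sum card (cls P R ` P)"
    by (rule card_Union_disjoint)
  then show ?thesis using comps_union[of P R] by simp
qed

lemma card_image_fiber_le:
  assumes "finite A" "\<And>x y. x \<in> A \<Longrightarrow> y \<in> A \<Longrightarrow> g x = g y \<Longrightarrow> f x = f y"
  shows "card (f ` A) \<le> card (g ` A)"
proof -
  have "f ` A = (\<lambda>c. f (inv_into A g c)) ` (g ` A)"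
  proof
    show "f ` A \<subseteq> (\<lambda>c. f (inv_into A g c)) ` (g ` A)"
    proof
      fix z assume "z \<in> f ` A"
      then obtain x where x: "x \<in> A" "z = f x" by blast
      have "inv_into A g (g x) \<in> A" using x(1) by (simp add: inv_into_into)
      moreover have "g (inv_into A g (g x)) = g x" using x(1) by (simp add: f_inv_into_f)
      ultimately have "f (inv_into A g (g x)) = f x" using assms(2) x(1) by blast
      then show "z \<in> (\<lambda>c. f (inv_into A g c)) ` (g ` A)" using x by force
    qed
  next
    show "(\<lambda>c. f (inv_into A g c)) ` (g ` A) \<subseteq> f ` A"
      by (auto intro: inv_into_into)
  qed
  then show ?thesis using assms(1) by (metis card_image_le finite_imageI)
qed

lemma rtrancl_ins2:
  assumes "sym R" "(X,Z) \<in> (insert (a,b) (insert (b,a) R))\<^sup>*"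
  shows "(X,Z) \<in> R\<^sup>* \<or> (((X,a) \<in> R\<^sup>* \<or> (X,b) \<in> R\<^sup>*) \<and> ((Z,a) \<in> R\<^sup>* \<or> (Z,b) \<in> R\<^sup>*))"
  using assms(2)
proof (induction rule: rtrancl_induct)
  case base then show ?case by simp
next
  case (step Y Z)
  have s: "sym (R\<^sup>*)" using assms(1) by (rule sym_rtrancl)
  from step.hyps(2) consider "(Y,Z) \<in> R" | "Y = a" "Z = b" | "Y = b" "Z = a" by blast
  then show ?case
  proof cases
    case 1
    then have "(Z,Y) \<in> R\<^sup>*" using s by (meson r_into_rtrancl symD)
    then show ?thesis using step.IH 1 by (meson rtrancl_trans rtrancl.rtrancl_into_rtrancl)
  next
    case 2 then show ?thesis using step.IH by auto
  next
    case 3 then show ?thesis using step.IH by auto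
  qed
qed

lemma comps_bound:
  assumes "finite P" "finite S"
  shows "S \<subseteq> P \<times> P \<Longrightarrow> card P \<le> card S + card (cls P (S \<union> S\<inverse>) ` P)"
  using assms(2)
proof (induction S rule: finite_induct)
  case empty
  have "cls P ({} \<union> {}\<inverse>) ` P = (\<lambda>X. {X}) ` P" unfolding cls_def by auto
  moreover have "card ((\<lambda>X. {X}) ` P) = card P" by (simp add: card_image)
  ultimately show ?case by simp
next
  case (insert p S)
  obtain a b where p: "p = (a,b)" by (cases p)
  have ab: "a \<in> P" "b \<in> P" using insert.prems p by auto
  define R where "R = S \<union> S\<inverse>"
  have symR: "sym R" unfolding R_def by (auto simp: sym_def)
  have s: "sym (R\<^sup>*)" using symR by (rule sym_rtrancl)
  have R': "insert p S \<union> (insert p S)\<inverse> = insert (a,b) (insert (b,a) R)"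
    unfolding R_def p by auto
  have IH: "card P \<le> card S + card (cls P R ` P)" using insert R_def by auto
  define T where "T = P - cls P R b"
  have sub: "cls P R ` P \<subseteq> insert (cls P R b) (cls P R ` T)"
  proof
    fix K assume "K \<in> cls P R ` P"
    then obtain X where X: "X \<in> P" "K = cls P R X" by blast
    show "K \<in> insert (cls P R b) (cls P R ` T)"
    proof (cases "X \<in> cls P R b")
      case True
      then have "(b,X) \<in> R\<^sup>*" by (simp add: cls_def)
      then have "cls P R b = cls P R X" using cls_eq[OF symR] by blast
      then show ?thesis using X by simp
    next
      case False then show ?thesis using X T_def by auto
    qed
  qed
  have c1: "card (cls P R ` P) \<le> card (cls P R ` T) + 1"
  proof -
    have "card (cls P R ` P) \<le> card (insert (cls P R b) (cls P R ` T))"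
      using sub assms(1) T_def by (intro card_mono) auto
    also have "\<dots> \<le> card (cls P R ` T) + 1"
      using assms(1) T_def by (simp add: card_insert_if)
    finally show ?thesis .
  qed
  let ?R' = "insert (a,b) (insert (b,a) R)"
  have c2: "card (cls P R ` T) \<le> card (cls P ?R' ` T)"
  proof (rule card_image_fiber_le)
    show "finite T" using assms(1) T_def by simp
  next
    fix X Y assume h: "X \<in> T" "Y \<in> T" "cls P ?R' X = cls P ?R' Y"
    have Y: "Y \<in> P" using h T_def by auto
    have "Y \<in> cls P ?R' Y" using Y by (simp add: cls_def)
    then have "Y \<in> cls P ?R' X" using h(3) by simp
    then have "(X,Y) \<in> ?R'\<^sup>*" by (simp add: cls_def)
    then have d: "(X,Y) \<in> R\<^sup>* \<or> (((X,a) \<in> R\<^sup>* \<or> (X,b) \<in> R\<^sup>*) \<and> ((Y,a) \<in> R\<^sup>* \<or> (Y,b) \<in> R\<^sup>*))"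
      by (rule rtrancl_ins2[OF symR])
    have nb: "(X,b) \<notin> R\<^sup>*" "(Y,b) \<notin> R\<^sup>*"
      using h T_def s by (auto simp: cls_def dest: symD)
    have "(X,Y) \<in> R\<^sup>*"
    proof -
      { assume "(X,a) \<in> R\<^sup>*" "(Y,a) \<in> R\<^sup>*"
        then have "(a,Y) \<in> R\<^sup>*" using s by (meson symD)
        then have "(X,Y) \<in> R\<^sup>*" using \<open>(X,a) \<in> R\<^sup>*\<close> by (meson rtrancl_trans) }
      then show ?thesis using d nb by blast
    qed
    then show "cls P R X = cls P R Y" by (rule cls_eq[OF symR])
  qed
  have c3: "card (cls P ?R' ` T) \<le> card (cls P ?R' ` P)"
    using assms(1) T_def by (intro card_mono) auto
  have "card (insert p S) = card S + 1" using insert by simp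
  then show ?case using IH c1 c2 c3 R' by simp
qed



lemma blk_props:
  assumes "partition_on V P" "u \<in> V"
  shows "blk P u \<in> P \<and> u \<in> blk P u"
proof -
  have "u \<in> \<Union>P" using partition_onD1[OF assms(1)] assms(2) by simp
  then obtain X where X: "X \<in> P" "u \<in> X" by blast
  have uniq: "Y = X" if hY: "Y \<in> P \<and> u \<in> Y" for Y
  proof (rule ccontr)
    assume ne: "Y \<noteq> X"
    have "disjnt Y X" using partition_onD2[OF assms(1)] hY X(1) ne unfolding pairwise_def by blast
    then show False using hY X(2) unfolding disjnt_def by blast
  qed
  have "blk P u = X" unfolding blk_def
  proof (rule the_equality)
    show "X \<in> P \<and> u \<in> X" using X by blast
  next
    fix Y assume "Y \<in> P \<and> u \<in> Y" then show "Y = X" by (rule uniq)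
  qed
  then show ?thesis using X by simp
qed

definition okg :: "('v, 'd) rgraph \<Rightarrow> bool" where
  "okg H \<longleftrightarrow> finite (verts H) \<and> finite (darts H) \<and>
     (\<forall>d\<in>darts H. opp H d \<in> darts H \<and> opp H (opp H d) = d \<and> vx H d \<in> verts H)"

lemma okg_restr:
  assumes "okg X" "B \<subseteq> edges X"
  shows "okg (restr X B)"
proof -
  have "\<Union>B \<subseteq> darts X" using assms unfolding edges_def okg_def by auto
  moreover have "\<forall>d\<in>\<Union>B. opp X d \<in> \<Union>B"
  proof
    fix d assume "d \<in> \<Union>B"
    then obtain b where b: "b \<in> B" "d \<in> b" by blast
    then obtain d0 where "d0 \<in> darts X" "b = {d0, opp X d0}" using assms(2) unfolding edges_def by auto
    then show "opp X d \<in> \<Union>B" using b assms(1) unfolding okg_def by (auto simp: insert_commute)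
  qed
  ultimately show ?thesis using assms(1) finite_subset
    unfolding okg_def restr_def subrg_def by (auto simp: finite_subset)
qed

lemma edges_restr:
  assumes "okg X" "B \<subseteq> edges X"
  shows "edges (restr X B) = B"
proof
  show "edges (restr X B) \<subseteq> B"
  proof
    fix e assume "e \<in> edges (restr X B)"
    then obtain d b where db: "b \<in> B" "d \<in> b" "e = {d, opp X d}"
      unfolding edges_def restr_def subrg_def by auto
    then obtain d0 where "d0 \<in> darts X" "b = {d0, opp X d0}" using assms(2) unfolding edges_def by auto
    then have "e = b" using db assms(1) unfolding okg_def by auto
    then show "e \<in> B" using db by simp
  qed
next
  show "B \<subseteq> edges (restr X B)"
  proof
    fix b assume b: "b \<in> B"
    then obtain d0 where d0: "d0 \<in> darts X" "b = {d0, opp X d0}" using assms(2) unfolding edges_def by auto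
    then have "d0 \<in> \<Union>B" using b by auto
    then show "b \<in> edges (restr X B)" using d0 unfolding edges_def restr_def subrg_def by auto
  qed
qed

lemma padj_sub:
  assumes "okg H" "partition_on (verts H) P"
  shows "padj H P \<subseteq> P \<times> P"
  using assms blk_props unfolding padj_def okg_def by fastforce

lemma padj_sym:
  assumes "okg H"
  shows "sym (padj H P)"
  unfolding sym_def padj_def
proof (intro allI impI)
  fix x y assume "(x, y) \<in> {(blk P (vx H d), blk P (vx H (opp H d))) |d. d \<in> darts H}"
  then obtain d where d: "d \<in> darts H" "x = blk P (vx H d)" "y = blk P (vx H (opp H d))" by blast
  then have "opp H d \<in> darts H" "opp H (opp H d) = d" using assms unfolding okg_def by auto
  then show "(y, x) \<in> {(blk P (vx H d), blk P (vx H (opp H d))) |d. d \<in> darts H}"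
  proof -
    have "(y, x) = (blk P (vx H (opp H d)), blk P (vx H (opp H (opp H d))))"
      using d \<open>opp H (opp H d) = d\<close> by simp
    then show ?thesis using \<open>opp H d \<in> darts H\<close> by blast
  qed
qed

lemma pcomps_cls: "pcomps H P = cls P (padj H P) ` P"
  unfolding pcomps_def cls_def by simp

lemma finite_pcomps:
  assumes "okg H" "partition_on (verts H) P"
  shows "finite P" "finite (pcomps H P)"
  using assms finite_elements unfolding okg_def pcomps_def by auto

lemma facts_a:
  assumes "okg H" "partition_on (verts H) P"
  shows "(\<Sum>K\<in>pcomps H P. card K) = card P"
  unfolding pcomps_cls using comps_card_sum[OF finite_pcomps(1)[OF assms] padj_sym[OF assms(1)]] .

lemma edge_pair_rt:
  assumes "okg H" "d \<in> darts H" "x \<in> {d, opp H d}" "y \<in> {d, opp H d}"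
  shows "(blk P (vx H x), blk P (vx H y)) \<in> (padj H P)\<^sup>*"
proof -
  have o: "opp H d \<in> darts H" "opp H (opp H d) = d" using assms unfolding okg_def by auto
  have p1: "(blk P (vx H d), blk P (vx H (opp H d))) \<in> padj H P"
    using assms(2) unfolding padj_def by blast
  have p2: "(blk P (vx H (opp H d)), blk P (vx H d)) \<in> padj H P"
    using o unfolding padj_def by (metis (mono_tags, lifting) mem_Collect_eq)
  show ?thesis using assms(3,4) p1 p2 by auto
qed

lemma facts_b:
  assumes "okg H" "partition_on (verts H) P"
  shows "(\<Sum>K\<in>pcomps H P. card (comp_edges H P K)) = card (edges H)"
proof -
  have fe: "finite (edges H)" using assms(1) unfolding okg_def edges_def by auto
  have symR: "sym (padj H P)" by (rule padj_sym[OF assms(1)])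
  have "card (\<Union>(comp_edges H P ` pcomps H P)) = (\<Sum>K\<in>pcomps H P. card (comp_edges H P K))"
  proof (rule card_UN_disjoint)
    show "finite (pcomps H P)" by (rule finite_pcomps(2)[OF assms])
    show "\<forall>i\<in>pcomps H P. finite (comp_edges H P i)"
      using fe unfolding comp_edges_def by auto
    show "\<forall>i\<in>pcomps H P. \<forall>j\<in>pcomps H P. i \<noteq> j \<longrightarrow> comp_edges H P i \<inter> comp_edges H P j = {}"
    proof (intro ballI impI)
      fix K K' assume h: "K \<in> pcomps H P" "K' \<in> pcomps H P" "K \<noteq> K'"
      show "comp_edges H P K \<inter> comp_edges H P K' = {}"
      proof (rule ccontr)
        assume "comp_edges H P K \<inter> comp_edges H P K' \<noteq> {}"
        then obtain e x y where e: "e \<in> edges H" "x \<in> e" "blk P (vx H x) \<in> K" "y \<in> e" "blk P (vx H y) \<in> K'"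
          unfolding comp_edges_def by blast
        obtain d where d: "d \<in> darts H" "e = {d, opp H d}" using e(1) unfolding edges_def by auto
        have "(blk P (vx H x), blk P (vx H y)) \<in> (padj H P)\<^sup>*"
          using edge_pair_rt[OF assms(1) d(1)] e d by auto
        then have "K = K'" using comps_same[OF symR] h e unfolding pcomps_cls by blast
        then show False using h by simp
      qed
    qed
  qed
  moreover have "\<Union>(comp_edges H P ` pcomps H P) = edges H"
  proof
    show "\<Union>(comp_edges H P ` pcomps H P) \<subseteq> edges H" unfolding comp_edges_def by auto
  next
    show "edges H \<subseteq> \<Union>(comp_edges H P ` pcomps H P)"
    proof
      fix e assume e: "e \<in> edges H"
      then obtain d where d: "d \<in> darts H" "e = {d, opp H d}" unfolding edges_def by auto
      have "vx H d \<in> verts H" using d assms(1) unfolding okg_def by auto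
      then have b: "blk P (vx H d) \<in> P" using blk_props[OF assms(2)] by blast
      then have "blk P (vx H d) \<in> cls P (padj H P) (blk P (vx H d))" by (simp add: cls_def)
      moreover have "cls P (padj H P) (blk P (vx H d)) \<in> pcomps H P" using b unfolding pcomps_cls by blast
      ultimately show "e \<in> \<Union>(comp_edges H P ` pcomps H P)"
        using e d unfolding comp_edges_def by blast
    qed
  qed
  ultimately show ?thesis by simp
qed

lemma facts_c:
  assumes "okg H" "partition_on (verts H) P"
  shows "card P \<le> card (edges H) + card (pcomps H P)"
proof -
  have fe: "finite (edges H)" using assms(1) unfolding okg_def edges_def by auto
  define c where "c e = (SOME x. x \<in> e)" for e :: "'b set"
  define f where "f e = (blk P (vx H (c e)), blk P (vx H (opp H (c e))))" for e
  define S where "S = f ` edges H"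
  have ce: "c e \<in> e \<and> e = {c e, opp H (c e)} \<and> c e \<in> darts H" if he: "e \<in> edges H" for e
  proof -
    obtain d where d: "d \<in> darts H" "e = {d, opp H d}" using he[unfolded edges_def] by blast
    have "c e \<in> e" unfolding c_def using d by (metis insertI1 someI_ex)
    moreover have "opp H d \<in> darts H" "opp H (opp H d) = d" using d assms(1) unfolding okg_def by auto
    ultimately show ?thesis using d by auto
  qed
  have padjS: "padj H P = S \<union> S\<inverse>"
  proof
    show "padj H P \<subseteq> S \<union> S\<inverse>"
    proof
      fix p assume "p \<in> padj H P"
      then obtain d where d: "d \<in> darts H" "p = (blk P (vx H d), blk P (vx H (opp H d)))"
        unfolding padj_def by blast
      define e where "e = {d, opp H d}"
      have e: "e \<in> edges H" unfolding e_def edges_def using d by auto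
      have oo: "opp H (opp H d) = d" using d assms(1) unfolding okg_def by auto
      from ce[OF e] have "c e = d \<or> c e = opp H d" unfolding e_def by auto
      then show "p \<in> S \<union> S\<inverse>"
      proof
        assume "c e = d" then have "f e = p" using d f_def by simp
        then show ?thesis using e S_def by blast
      next
        assume "c e = opp H d" then have "f e = prod.swap p" using d f_def oo by simp
        then show ?thesis using e S_def by (metis UnI2 converse_iff image_eqI prod.collapse swap_simp)
      qed
    qed
  next
    show "S \<union> S\<inverse> \<subseteq> padj H P"
    proof
      fix p assume "p \<in> S \<union> S\<inverse>"
      have "\<exists>e\<in>edges H. p = f e \<or> p = prod.swap (f e)"
        using \<open>p \<in> S \<union> S\<inverse>\<close>
      proof
        assume "p \<in> S" then show ?thesis unfolding S_def by blast
      next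
        assume "p \<in> S\<inverse>" then have "prod.swap p \<in> S" by (cases p) auto
        then obtain e where e1: "e \<in> edges H" "prod.swap p = f e" unfolding S_def by blast
        then have "p = prod.swap (f e)" by (metis swap_swap)
        then show ?thesis using e1(1) by blast
      qed
      then obtain e where e: "e \<in> edges H" "p = f e \<or> p = prod.swap (f e)" by blast
      have cd: "c e \<in> darts H" using ce[OF e(1)] by blast
      have "opp H (c e) \<in> darts H" "opp H (opp H (c e)) = c e" using cd assms(1) unfolding okg_def by auto
      have "f e \<in> padj H P" unfolding f_def padj_def using cd by blast
      moreover have "prod.swap (f e) = (blk P (vx H (opp H (c e))), blk P (vx H (opp H (opp H (c e)))))"
        using \<open>opp H (opp H (c e)) = c e\<close> by (simp add: f_def)
      then have "prod.swap (f e) \<in> padj H P"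
        using \<open>opp H (c e) \<in> darts H\<close> unfolding padj_def by blast
      ultimately show "p \<in> padj H P" using e(2) by blast
    qed
  qed
  have Ssub: "S \<subseteq> P \<times> P" using padjS padj_sub[OF assms] by blast
  have fS: "finite S" using fe S_def by simp
  have cS: "card S \<le> card (edges H)" using fe S_def card_image_le by blast
  have "card P \<le> card S + card (cls P (S \<union> S\<inverse>) ` P)"
    using comps_bound[OF finite_pcomps(1)[OF assms] fS Ssub] .
  then show ?thesis using cS padjS pcomps_cls[of H P] by simp
qed

lemma gen2_rw:
  "2 - gen2 H P w K = int (nf (comp_rg H P K)) - int (card (comp_edges H P K)) + int (card K) - int (\<Sum>X\<in>K. w X)"
  by (simp add: gen2_def)

lemma term_eq:
  assumes ok: "okg X" and pt: "partition_on (verts X) P" and B: "B \<subseteq> edges X" and N: "0 < N"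
  shows "(-1) ^ card (edges X - B) * qone N ns (restr X B) P w =
     (-1) powi (int (card (edges X)) - int (card P)) *
     ((- real N) ^ pnullity (restr X B) P *
      (\<Prod>K\<in>pcomps (restr X B) P. - (1 / real N) * (\<Sum>n\<leftarrow>ns. real n powi (2 - gen2 (restr X B) P w K))))"
proof -
  define H where "H = restr X B"
  have okH: "okg H" unfolding H_def by (rule okg_restr[OF ok B])
  have ptH: "partition_on (verts H) P" using pt unfolding H_def restr_def subrg_def by simp
  have eH: "edges H = B" unfolding H_def by (rule edges_restr[OF ok B])
  have fe: "finite (edges X)" using ok unfolding okg_def edges_def by auto
  define a where "a K = (\<Sum>n\<leftarrow>ns. real n powi (int (nf (comp_rg H P K)) - int (card (comp_edges H P K))
                                 + int (card K) - int (\<Sum>X\<in>K. w X)))" for K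
  have m: "card (edges X - B) + card B = card (edges X)"
    using fe B by (metis card_Diff_subset card_mono le_add_diff_inverse2 finite_subset)
  have A: "(-1) ^ card (edges X - B) * (\<Prod>K\<in>pcomps H P. real N powi (int (card (comp_edges H P K)) - int (card K)) * a K)
       = (-1) powi (int (card (edges X)) - int (card P)) * ((- real N) ^ (card B + card (pcomps H P) - card P) *
          (\<Prod>K\<in>pcomps H P. -(1/real N) * a K))"
    by (rule alg[OF finite_pcomps(2)[OF okH ptH] _ _ _ _ m])
       (use N facts_a[OF okH ptH] facts_b[OF okH ptH] facts_c[OF okH ptH] eH in auto)
  have q: "qone N ns H P w = (\<Prod>K\<in>pcomps H P. real N powi (int (card (comp_edges H P K)) - int (card K)) * a K)"
    unfolding qone_def a_def by simp
  have pn: "pnullity H P = card B + card (pcomps H P) - card P"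
    unfolding pnullity_def ne_def eH ..
  have pr: "(\<Prod>K\<in>pcomps H P. - (1 / real N) * (\<Sum>n\<leftarrow>ns. real n powi (2 - gen2 H P w K)))
      = (\<Prod>K\<in>pcomps H P. -(1/real N) * a K)"
    unfolding a_def gen2_rw ..
  show ?thesis using A unfolding H_def[symmetric] q pn pr .
qed


lemma okg_G: "wf_rgraph G \<Longrightarrow> okg G"
  unfolding wf_rgraph_def okg_def by auto

lemma okg_dual:
  assumes "wf_rgraph G" shows "okg (dual G)"
proof -
  have "finite (faces G)" using assms unfolding wf_rgraph_def faces_def isolated_verts_def by auto
  moreover have "\<forall>d\<in>darts G. Inr (orbit_of (facep G) d) \<in> faces G" unfolding faces_def by auto
  ultimately show ?thesis using assms unfolding wf_rgraph_def okg_def dual_def by auto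
qed

lemma edges_dual: "edges (dual G) = edges G"
  unfolding edges_def dual_def by simp

lemma pone_qone: "pone_dual N ns H P w = qone N ns H P w"
  unfolding pone_dual_def qone_def ..

lemma sum_pow_compl:
  assumes "finite E"
  shows "(\<Sum>A\<in>Pow E. f (E - A)) = (\<Sum>A\<in>Pow E. (f A :: real))"
  by (rule sum.reindex_bij_witness[where i = "\<lambda>A. E - A" and j = "\<lambda>A. E - A"]) auto

theorem theorem5p5:
  fixes G :: "('v, 'd) rgraph"
    and VV :: "'v set set" and wV :: "'v set \<Rightarrow> nat"
    and FF :: "('v + 'd set) set set" and wF :: "('v + 'd set) set \<Rightarrow> nat"
    and \<Gamma> :: "('g, 'b) monoid_scheme" and ns :: "nat list"
  assumes "packaged G VV FF"
    and "group \<Gamma>" and "finite (carrier \<Gamma>)"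
    and "irrep_dims \<Gamma> ns"
  shows "(qflow (card (carrier \<Gamma>)) ns G VV wV =
           (-1) powi (int (ne G) - int (card VV)) *
           tutte G VV wV FF wF 1 (\<lambda>_. 1) (- real (card (carrier \<Gamma>)))
             (\<lambda>j. - (1 / real (card (carrier \<Gamma>))) * (\<Sum>n\<leftarrow>ns. real n powi (2 - j))))
         \<and> (pflow (card (carrier \<Gamma>)) ns G FF wF =
           (-1) powi (int (ne G) - int (card FF)) *
           tutte G VV wV FF wF (- real (card (carrier \<Gamma>)))
             (\<lambda>j. - (1 / real (card (carrier \<Gamma>))) * (\<Sum>n\<leftarrow>ns. real n powi (2 - j))) 1 (\<lambda>_. 1))"
proof -
  define N where "N = card (carrier \<Gamma>)"
  have wf: "wf_rgraph G" and pV: "partition_on (verts G) VV" and pF: "partition_on (faces G) FF"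
    using assms(1) unfolding packaged_def by auto
  have pF': "partition_on (verts (dual G)) FF" using pF unfolding dual_def by simp
  have "\<one>\<^bsub>\<Gamma>\<^esub> \<in> carrier \<Gamma>" using assms(2) by (simp add: group.is_monoid monoid.one_closed)
  then have Npos: "0 < N" unfolding N_def using assms(3) card_gt_0_iff by blast
  have okG: "okg G" by (rule okg_G[OF wf])
  have okD: "okg (dual G)" by (rule okg_dual[OF wf])
  have fE: "finite (edges G)" using okG unfolding okg_def edges_def by auto
  have part1: "qflow N ns G VV wV =
           (-1) powi (int (ne G) - int (card VV)) *
           tutte G VV wV FF wF 1 (\<lambda>_. 1) (- real N)
             (\<lambda>j. - (1 / real N) * (\<Sum>n\<leftarrow>ns. real n powi (2 - j)))"
  proof -
    have "qflow N ns G VV wV = (\<Sum>A\<in>Pow (edges G). (-1) powi (int (card (edges G)) - int (card VV)) *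
       ((- real N) ^ pnullity (restr G A) VV *
        (\<Prod>K\<in>pcomps (restr G A) VV. - (1 / real N) * (\<Sum>n\<leftarrow>ns. real n powi (2 - gen2 (restr G A) VV wV K)))))"
      unfolding qflow_def by (rule sum.cong[OF refl]) (use term_eq[OF okG pV _ Npos] in auto)
    also have "\<dots> = (-1) powi (int (ne G) - int (card VV)) *
           tutte G VV wV FF wF 1 (\<lambda>_. 1) (- real N)
             (\<lambda>j. - (1 / real N) * (\<Sum>n\<leftarrow>ns. real n powi (2 - j)))"
      unfolding tutte_def ne_def by (simp add: sum_distrib_left)
    finally show ?thesis .
  qed
  have part2: "pflow N ns G FF wF =
           (-1) powi (int (ne G) - int (card FF)) *
           tutte G VV wV FF wF (- real N)
             (\<lambda>j. - (1 / real N) * (\<Sum>n\<leftarrow>ns. real n powi (2 - j))) 1 (\<lambda>_. 1)"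
  proof -
    define T where "T A = (- real N) ^ pnullity (restr (dual G) A) FF *
        (\<Prod>K\<in>pcomps (restr (dual G) A) FF. - (1 / real N) * (\<Sum>n\<leftarrow>ns. real n powi (2 - gen2 (restr (dual G) A) FF wF K)))" for A
    have "pflow N ns G FF wF = (\<Sum>A\<in>Pow (edges G). (-1) powi (int (card (edges G)) - int (card FF)) * T A)"
      unfolding pflow_def
    proof (rule sum.cong[OF refl])
      fix A assume A: "A \<in> Pow (edges G)"
      then have "contract_dual G (edges G - A) = restr (dual G) A"
        unfolding contract_dual_def edges_dual by (simp add: double_diff)
      then show "(-1) ^ card (edges G - A) * pone_dual N ns (contract_dual G (edges G - A)) FF wF =
         (-1) powi (int (card (edges G)) - int (card FF)) * T A"
        using term_eq[OF okD pF', of A N ns wF] A Npos unfolding T_def pone_qone edges_dual by simp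
    qed
    also have "\<dots> = (-1) powi (int (card (edges G)) - int (card FF)) * (\<Sum>A\<in>Pow (edges G). T (edges G - A))"
      by (simp add: sum_distrib_left sum_pow_compl[OF fE])
    also have "\<dots> = (-1) powi (int (ne G) - int (card FF)) *
           tutte G VV wV FF wF (- real N)
             (\<lambda>j. - (1 / real N) * (\<Sum>n\<leftarrow>ns. real n powi (2 - j))) 1 (\<lambda>_. 1)"
      unfolding tutte_def ne_def T_def by simp
    finally show ?thesis .
  qed
  show ?thesis using part1 part2 unfolding N_def by simp
qed


end
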